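(* Let $f:[0,\infty)\to[0,\infty)$ be non-increasing with $f(0)=1$ and $f\in C^4([0,\infty))$, let $\mathcal L(\gamma)=\int_0^\infty e^{-\gamma x}f(x)dx$ and $\gamma_{\min}=\inf\{\gamma\in\mathbb R:\mathcal L(\gamma)<\infty\}$, and assume that for every $\gamma>\gamma_{\min}$ and $j=0,1,2,3,4$, $e^{-\gamma x}f^{(j)}(x)\in L^1([0,\infty))$ and $e^{-\gamma x}f^{(j)}(x)\to0$ as $x\to\infty$. For $s\ge1$ and $\rho=1-\gamma/\sqrt s$ define $F_s(\rho)=\sum_{n=0}^\infty f\bigl(\tfrac{n+1}{\sqrt s}\bigr)\rho^{n+1}$ and $\gamma_s=-\sqrt s\ln(1-\gamma/\sqrt s)$. Then for $\gamma_{\min}<\gamma\le\sqrt s$, $F_s(\rho)=\sqrt s\,\mathcal L(\gamma_s)-\tfrac12+O(1/\sqrt s)$, where the $O(1/\sqrt s)$ holds uniformly in $\gamma$ in any compact subset of $(\gamma_{\min},\infty)$.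
   Context: $F_s(\rho)$ is the quantity $\sum_{n\ge0}p_s(0)\cdots p_s(n)\rho^{n+1}$ for an $s$-server system with admission control under the global control $p_s(0)\cdots p_s(n)=f((n+1)/\sqrt s)$. *)

theory Defs
  imports "HOL-Analysis.Analysis"
begin

definition laplace :: "(real \<Rightarrow> real) \<Rightarrow> real \<Rightarrow> ennreal" where
  "laplace f \<gamma> = (\<integral>\<^sup>+ x. ennreal (exp (- \<gamma> * x) * f x) * indicator {0..} x \<partial>lborel)"

definition gamma_min :: "(real \<Rightarrow> real) \<Rightarrow> ereal" where
  "gamma_min f = Inf {ereal \<gamma> | \<gamma>. laplace f \<gamma> < \<infinity>}"

definition F_s :: "(real \<Rightarrow> real) \<Rightarrow> real \<Rightarrow> real \<Rightarrow> real" where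
  "F_s f s \<rho> = (\<Sum>n. f (real (n + 1) / sqrt s) * \<rho> ^ (n + 1))"

definition gamma_s :: "real \<Rightarrow> real \<Rightarrow> real" where
  "gamma_s s \<gamma> = - sqrt s * ln (1 - \<gamma> / sqrt s)"

end

theory Submission
  imports Defs
begin


lemma cell:
  fixes G Gp Gpp W :: "real \<Rightarrow> real" and u v :: real
  assumes uv: "u \<le> v"
    and d1: "\<And>t. t \<in> {u..v} \<Longrightarrow> (G has_real_derivative Gp t) (at t within {u..v})"
    and d2: "\<And>t. t \<in> {u..v} \<Longrightarrow> (Gp has_real_derivative Gpp t) (at t within {u..v})"
    and Wint: "W integrable_on {u..v}"
    and Wb: "\<And>t. t \<in> {u..v} \<Longrightarrow> \<bar>Gpp t\<bar> \<le> W t"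
  shows "\<bar>integral {u..v} G - (v-u)*(G u + G v)/2\<bar> \<le> (v-u)^2/8 * integral {u..v} W"
proof -
  define H where "H t = (t-u)*(v-t)/2 * Gp t - (u+v-2*t)/2 * G t" for t
  have dH: "(H has_real_derivative ((t-u)*(v-t)/2 * Gpp t + G t)) (at t within {u..v})"
    if "t \<in> {u..v}" for t
    unfolding H_def
    by (rule derivative_eq_intros d1 d2 that refl | simp add: field_simps)+
  have FT: "((\<lambda>t. (t-u)*(v-t)/2 * Gpp t + G t) has_integral (H v - H u)) {u..v}"
    by (rule fundamental_theorem_of_calculus[OF uv])
       (use dH in \<open>auto simp: has_real_derivative_iff_has_vector_derivative\<close>)
  have Hvu: "H v - H u = (v-u)*(G u + G v)/2"
    unfolding H_def by (simp add: field_simps)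
  have Gc: "continuous_on {u..v} G" by (rule DERIV_continuous_on[OF d1])
  have Gi: "(G has_integral integral {u..v} G) {u..v}"
    using integrable_continuous_interval[OF Gc] by (simp add: integrable_integral)
  have PG: "((\<lambda>t. (t-u)*(v-t)/2 * Gpp t) has_integral ((v-u)*(G u + G v)/2 - integral {u..v} G)) {u..v}"
    using has_integral_diff[OF FT Gi] Hvu by simp
  have "norm (integral {u..v} (\<lambda>t. (t-u)*(v-t)/2 * Gpp t)) \<le> integral {u..v} (\<lambda>t. (v-u)^2/8 * W t)"
  proof (rule integral_norm_bound_integral)
    show "(\<lambda>t. (t-u)*(v-t)/2 * Gpp t) integrable_on {u..v}" using PG by blast
    show "(\<lambda>t. (v-u)^2/8 * W t) integrable_on {u..v}" using integrable_cmul[OF Wint, of "(v-u)^2/8"] by simp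
  next
    fix t assume t: "t \<in> {u..v}"
    have e: "(v-u)^2/4 - (t-u)*(v-t) = ((t-u)-(v-t))^2/4" by (simp add: power2_eq_square field_simps)
    have p0: "0 \<le> (t-u)*(v-t)" using t by auto
    have p1: "(t-u)*(v-t) \<le> (v-u)^2/4" using e zero_le_power2[of "(t-u)-(v-t)"] by linarith
    have "norm ((t-u)*(v-t)/2 * Gpp t) = (t-u)*(v-t)/2 * \<bar>Gpp t\<bar>" using p0 t by (simp add: abs_mult)
    also have "\<dots> \<le> (v-u)^2/8 * W t"
      using mult_mono[OF _ Wb[OF t], of "(t-u)*(v-t)/2" "(v-u)^2/8"] p0 p1 by simp
    finally show "norm ((t-u)*(v-t)/2 * Gpp t) \<le> (v-u)^2/8 * W t" .
  qed
  moreover have I2: "integral {u..v} (\<lambda>t. (v-u)^2/8 * W t) = (v-u)^2/8 * integral {u..v} W"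
    by simp
  ultimately have "\<bar>(v-u)*(G u + G v)/2 - integral {u..v} G\<bar> \<le> (v-u)^2/8 * integral {u..v} W"
    using integral_unique[OF PG] by (metis real_norm_def)
  then show ?thesis by (simp add: abs_minus_commute)
qed



lemma hk_int_nonneg:
  fixes g :: "real \<Rightarrow> real"
  assumes "g integrable_on S" "\<And>x. x \<in> S \<Longrightarrow> 0 \<le> g x"
  shows "0 \<le> integral S g"
  using has_integral_nonneg[OF integrable_integral[OF assms(1)]] assms(2) by blast

lemma int_lim:
  fixes g :: "real \<Rightarrow> real"
  assumes gi: "g integrable_on {0..}" and gnn: "\<And>t. 0 \<le> t \<Longrightarrow> 0 \<le> g t" and h: "0 < h"
  shows "(\<lambda>N. integral {0..real N * h} g) \<longlonglongrightarrow> integral {0..} g"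
proof -
  define fk where "fk k x = (if x \<in> {0..real k*h} then g x else 0)" for k x
  have II: "{0..real k*h} \<inter> {0..} = {0..real k*h}" for k by auto
  have eq: "integral {0..} (fk k) = integral {0..real k*h} g" for k
    unfolding fk_def integral_restrict_Int II ..
  have gsub: "g integrable_on {0..b}" for b
    by (rule integrable_on_subinterval[OF gi]) auto
  have int: "fk k integrable_on {0..}" for k
    unfolding fk_def integrable_restrict_Int II by (rule gsub)
  have mono: "fk k x \<le> fk (Suc k) x" if "x \<in> {0..}" for k x
  proof -
    have "real k * h \<le> real (Suc k) * h" using h by (simp add: mult_right_mono)
    then show ?thesis using that gnn[of x] unfolding fk_def by auto
  qed
  have lim: "(\<lambda>k. fk k x) \<longlonglongrightarrow> g x" if "x \<in> {0..}" for x
  proof -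
    obtain k0 where k0: "x < real k0 * h" using ex_less_of_nat_mult[OF h] by blast
    have "eventually (\<lambda>k. fk k x = g x) sequentially"
    proof (rule eventually_sequentiallyI[of k0])
      fix k assume "k0 \<le> k"
      then have "real k0 * h \<le> real k * h" using h by (simp add: mult_right_mono)
      then show "fk k x = g x" using k0 that unfolding fk_def by auto
    qed
    then show ?thesis by (rule tendsto_eventually)
  qed
  have bnd: "bounded (range (\<lambda>k. integral {0..} (fk k)))"
    unfolding bounded_real
  proof (intro exI ballI)
    fix y assume "y \<in> range (\<lambda>k. integral {0..} (fk k))"
    then obtain k where y: "y = integral {0..real k*h} g" using eq by auto
    have "0 \<le> integral {0..real k*h} g" by (rule hk_int_nonneg[OF gsub]) (auto intro: gnn)
    moreover have "integral {0..real k*h} g \<le> integral {0..} g"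
      by (rule integral_subset_le) (auto intro: gsub gi gnn)
    ultimately show "\<bar>y\<bar> \<le> integral {0..} g" using y by simp
  qed
  have "(\<lambda>k. integral {0..} (fk k)) \<longlonglongrightarrow> integral {0..} g"
    using monotone_convergence_increasing[OF int mono lim bnd] by blast
  then show ?thesis unfolding eq .
qed

lemma trap:
  fixes g g1 g2 W :: "real \<Rightarrow> real" and h :: real
  assumes h: "0 < h"
    and d1: "\<And>t. 0 \<le> t \<Longrightarrow> (g has_real_derivative g1 t) (at t within {0..})"
    and d2: "\<And>t. 0 \<le> t \<Longrightarrow> (g1 has_real_derivative g2 t) (at t within {0..})"
    and gi: "g integrable_on {0..}" and Wi: "W integrable_on {0..}"
    and Wb: "\<And>t. 0 \<le> t \<Longrightarrow> \<bar>g2 t\<bar> \<le> W t"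
    and gnn: "\<And>t. 0 \<le> t \<Longrightarrow> 0 \<le> g t" and g0: "g 0 = 1"
    and glim: "(g \<longlongrightarrow> 0) at_top"
  shows "summable (\<lambda>n. g (real (n+1) * h)) \<and>
    \<bar>(\<Sum>n. g (real (n+1) * h)) - (integral {0..} g / h - 1/2)\<bar> \<le> h/8 * integral {0..} W"
proof -
  define S where "S N = (\<Sum>n<N. g (real (n+1) * h))" for N
  define E where "E N = h * S N + h/2 - h * g (real N * h)/2 - integral {0..real N*h} g" for N
  define JW where "JW = integral {0..} W"
  define I where "I = integral {0..} g"
  have gsub: "g integrable_on {a..b}" if "0 \<le> a" for a b
    by (rule integrable_on_subinterval[OF gi]) (use that in auto)
  have Wsub: "W integrable_on {a..b}" if "0 \<le> a" for a b
    by (rule integrable_on_subinterval[OF Wi]) (use that in auto)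
  have Wnn: "0 \<le> W t" if "0 \<le> t" for t using Wb[OF that] by linarith
  have step: "\<bar>E N\<bar> \<le> h^2/8 * integral {0..real N*h} W" for N
  proof (induction N)
    case 0
    then show ?case by (simp add: E_def S_def g0)
  next
    case (Suc N)
    define a where "a = real N * h"
    define b where "b = real (Suc N) * h"
    have a0: "0 \<le> a" and ab: "a \<le> b" and ba: "b - a = h" using h
      by (auto simp: a_def b_def algebra_simps)
    have cg: "integral {0..a} g + integral {a..b} g = integral {0..b} g"
      by (rule Henstock_Kurzweil_Integration.integral_combine[OF a0 ab gsub]) simp
    have cW: "integral {0..a} W + integral {a..b} W = integral {0..b} W"
      by (rule Henstock_Kurzweil_Integration.integral_combine[OF a0 ab Wsub]) simp
    have cell1: "\<bar>integral {a..b} g - (b-a)*(g a + g b)/2\<bar> \<le> (b-a)^2/8 * integral {a..b} W"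
    proof (rule cell[OF ab, where Gp=g1 and Gpp=g2])
      fix t assume t: "t \<in> {a..b}"
      then have t0: "0 \<le> t" using a0 by auto
      have sub: "{a..b} \<subseteq> {0..}" using a0 by auto
      show "(g has_real_derivative g1 t) (at t within {a..b})"
        by (rule DERIV_subset[OF d1[OF t0] sub])
      show "(g1 has_real_derivative g2 t) (at t within {a..b})"
        by (rule DERIV_subset[OF d2[OF t0] sub])
      show "\<bar>g2 t\<bar> \<le> W t" by (rule Wb[OF t0])
    qed (rule Wsub[OF a0])
    have SS: "S (Suc N) = S N + g b" by (simp add: S_def b_def)
    have E1: "E (Suc N) = h * (S N + g b) + h/2 - h * g b/2 - (integral {0..a} g + integral {a..b} g)"
      unfolding E_def SS b_def[symmetric] cg ..
    have E2: "E N = h * S N + h/2 - h * g a/2 - integral {0..a} g"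
      unfolding E_def a_def ..
    have ES: "E (Suc N) = E N + (h*(g a + g b)/2 - integral {a..b} g)"
      unfolding E1 E2 by (simp add: algebra_simps)
    have "\<bar>E (Suc N)\<bar> \<le> \<bar>E N\<bar> + \<bar>integral {a..b} g - (b-a)*(g a + g b)/2\<bar>"
      unfolding ES ba by linarith
    also have "\<dots> \<le> h^2/8 * integral {0..a} W + h^2/8 * integral {a..b} W"
      using Suc.IH[folded a_def] cell1 unfolding ba by linarith
    also have "\<dots> = h^2/8 * integral {0..b} W" unfolding cW[symmetric] by (simp add: distrib_left)
    finally show ?case by (simp add: b_def)
  qed
  have Wle: "integral {0..b} W \<le> JW" for b
    unfolding JW_def by (rule integral_subset_le) (auto intro: Wsub Wi Wnn)
  have gle: "integral {0..b} g \<le> I" for b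
    unfolding I_def by (rule integral_subset_le) (auto intro: gsub gi gnn)
  have EB: "\<bar>E N\<bar> \<le> h^2/8 * JW" for N
    using step[of N] Wle[of "real N * h"] h
    by (smt (verit) mult_left_mono zero_le_power2 divide_nonneg_pos)
  have lin: "LIM N sequentially. real N * h :> at_top"
    using filterlim_tendsto_pos_mult_at_top[OF tendsto_const h filterlim_real_sequentially]
    by (simp add: mult.commute)
  have gN: "(\<lambda>N. g (real N * h)) \<longlonglongrightarrow> 0"
    by (rule filterlim_compose[OF glim lin])
  obtain B where B: "\<And>N. \<bar>g (real N * h)\<bar> \<le> B"
    using convergent_imp_Bseq[OF convergentI[OF gN]] by (metis BseqE real_norm_def)
  have Sb: "S N \<le> (h^2/8 * JW + h*B/2 + I) / h" for N
  proof -
    have "h * S N = E N - h/2 + h * g (real N * h)/2 + integral {0..real N*h} g"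
      by (simp add: E_def)
    also have "\<dots> \<le> h^2/8 * JW + h*B/2 + I"
    proof -
      have "h * g (real N*h) \<le> h * B" using B[of N] h by (intro mult_left_mono) auto
      then show ?thesis using EB[of N] gle[of "real N * h"] h by linarith
    qed
    finally show ?thesis using h by (simp add: field_simps)
  qed
  have summ: "summable (\<lambda>n. g (real (n+1) * h))"
  proof (rule bounded_imp_summable)
    show "0 \<le> g (real (n+1) * h)" for n using h by (intro gnn) simp
    show "(\<Sum>k\<le>n. g (real (k+1) * h)) \<le> (h^2/8 * JW + h*B/2 + I) / h" for n
      using Sb[of "Suc n"] unfolding S_def lessThan_Suc_atMost .
  qed
  define F where "F = (\<Sum>n. g (real (n+1) * h))"
  have SF: "S \<longlonglongrightarrow> F" unfolding S_def F_def using summable_LIMSEQ[OF summ] by simp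
  have EL: "E \<longlonglongrightarrow> h * F + h/2 - h * 0/2 - I"
    unfolding E_def[abs_def] I_def
    by (intro tendsto_intros SF gN int_lim gi h) (use gnn in auto)
  have "\<bar>h * F + h/2 - h * 0/2 - I\<bar> \<le> h^2/8 * JW"
    by (rule LIMSEQ_le_const2[OF tendsto_rabs[OF EL]]) (use EB in auto)
  then have "\<bar>h * F + h/2 - I\<bar> / h \<le> h/8 * JW"
    using h by (simp add: field_simps power2_eq_square)
  moreover have "\<bar>h * F + h/2 - I\<bar> / h = \<bar>F - (I / h - 1/2)\<bar>"
    using h by (simp add: field_simps abs_div_pos[symmetric])
  ultimately have "\<bar>F - (I / h - 1/2)\<bar> \<le> h/8 * JW" by linarith
  then show ?thesis using summ unfolding F_def I_def JW_def by simp
qed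

lemma trap_dec:
  fixes g :: "real \<Rightarrow> real" and h :: real
  assumes h: "0 < h" and gi: "g integrable_on {0..}"
    and gnn: "\<And>t. 0 \<le> t \<Longrightarrow> 0 \<le> g t"
    and gdec: "\<And>x y. 0 \<le> x \<Longrightarrow> x \<le> y \<Longrightarrow> g y \<le> g x"
    and summ: "summable (\<lambda>n. g (real (n+1) * h))"
  shows "(\<Sum>n. g (real (n+1) * h)) \<le> integral {0..} g / h"
proof -
  have gsub: "g integrable_on {a..b}" if "0 \<le> a" for a b
    by (rule integrable_on_subinterval[OF gi]) (use that in auto)
  have step: "h * (\<Sum>n<N. g (real (n+1) * h)) \<le> integral {0..real N * h} g" for N
  proof (induction N)
    case 0 then show ?case by simp
  next
    case (Suc N)
    define a where "a = real N * h"
    define b where "b = real (Suc N) * h"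
    have a0: "0 \<le> a" and ab: "a \<le> b" and ba: "b - a = h" using h
      by (auto simp: a_def b_def algebra_simps)
    have cg: "integral {0..a} g + integral {a..b} g = integral {0..b} g"
      by (rule Henstock_Kurzweil_Integration.integral_combine[OF a0 ab gsub]) simp
    have "integral {a..b} (\<lambda>_. g b) \<le> integral {a..b} g"
      by (rule Henstock_Kurzweil_Integration.integral_le) (use a0 gsub in \<open>auto intro: gdec\<close>)
    then have "h * g b \<le> integral {a..b} g" using ab ba by simp
    have s1: "(\<Sum>n<Suc N. g (real (n+1) * h)) = (\<Sum>n<N. g (real (n+1) * h)) + g b"
      unfolding b_def by simp
    have s2: "integral {0..real (Suc N) * h} g = integral {0..a} g + integral {a..b} g"
      by (simp only: b_def[symmetric] cg)
    show ?case unfolding s1 s2 using Suc.IH \<open>h * g b \<le> integral {a..b} g\<close>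
      unfolding a_def by (simp add: distrib_left)
  qed
  have "(\<Sum>n<N. g (real (n+1) * h)) \<le> integral {0..} g / h" for N
  proof -
    have "integral {0..real N * h} g \<le> integral {0..} g"
      by (rule integral_subset_le) (auto intro: gsub gi gnn)
    then show ?thesis using step[of N] h by (simp add: field_simps)
  qed
  then show ?thesis by (rule suminf_le_const[OF summ])
qed



lemma wbound:
  fixes c B b x D1 D2 F0 :: real
  assumes cB: "\<bar>c\<bar> \<le> B" and bc: "b \<le> c" and x: "0 \<le> x"
  shows "\<bar>exp(-c*x) * (D2 - 2*c*D1 + c^2*F0)\<bar> \<le> exp(-b*x) * (\<bar>D2\<bar> + 2*B*\<bar>D1\<bar> + B^2*\<bar>F0\<bar>)"
proof -
  have "\<bar>D2 - 2*c*D1 + c^2*F0\<bar> \<le> \<bar>D2\<bar> + 2*\<bar>c\<bar>*\<bar>D1\<bar> + c^2*\<bar>F0\<bar>"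
  proof -
    have e1: "\<bar>2*c*D1\<bar> = 2*\<bar>c\<bar>*\<bar>D1\<bar>" by (simp add: abs_mult)
    have e2: "\<bar>c^2*F0\<bar> = c^2*\<bar>F0\<bar>" by (simp add: abs_mult)
    have "\<bar>D2 - 2*c*D1 + c^2*F0\<bar> \<le> \<bar>D2\<bar> + \<bar>2*c*D1\<bar> + \<bar>c^2*F0\<bar>"
      unfolding abs_le_iff by (simp add: abs_le_iff) linarith?
    then show ?thesis unfolding e1 e2 .
  qed
  also have "\<dots> \<le> \<bar>D2\<bar> + 2*B*\<bar>D1\<bar> + B^2*\<bar>F0\<bar>"
  proof -
    have "c^2 \<le> B^2" using cB by (metis abs_ge_zero order_trans power2_abs power_mono)
    then have "c^2*\<bar>F0\<bar> \<le> B^2*\<bar>F0\<bar>" by (intro mult_right_mono) auto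
    moreover have "\<bar>c\<bar>*\<bar>D1\<bar> \<le> B*\<bar>D1\<bar>" using cB by (intro mult_right_mono) auto
    ultimately show ?thesis by linarith
  qed
  finally have A: "\<bar>D2 - 2*c*D1 + c^2*F0\<bar> \<le> \<bar>D2\<bar> + 2*B*\<bar>D1\<bar> + B^2*\<bar>F0\<bar>" .
  have E: "exp(-c*x) \<le> exp(-b*x)" using bc x by (simp add: mult_right_mono)
  have "\<bar>exp(-c*x) * (D2 - 2*c*D1 + c^2*F0)\<bar> = exp(-c*x) * \<bar>D2 - 2*c*D1 + c^2*F0\<bar>"
    by (simp add: abs_mult)
  also have "\<dots> \<le> exp(-b*x) * (\<bar>D2\<bar> + 2*B*\<bar>D1\<bar> + B^2*\<bar>F0\<bar>)"
    by (rule mult_mono[OF E A]) auto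
  finally show ?thesis .
qed

theorem theorem4p1:
  fixes f :: "real \<Rightarrow> real" and Df :: "nat \<Rightarrow> real \<Rightarrow> real"
  assumes nonneg: "\<And>x. 0 \<le> x \<Longrightarrow> 0 \<le> f x"
    and nonincr: "\<And>x y. 0 \<le> x \<Longrightarrow> x \<le> y \<Longrightarrow> f y \<le> f x"
    and f0: "f 0 = 1"
    and Df0: "Df 0 = f"
    and Df_deriv: "\<And>j x. j < 4 \<Longrightarrow> 0 \<le> x \<Longrightarrow>
                     (Df j has_real_derivative Df (Suc j) x) (at x within {0..})"
    and Df4_cont: "continuous_on {0..} (Df 4)"
    and integrable: "\<And>\<gamma> j. gamma_min f < ereal \<gamma> \<Longrightarrow> j \<le> 4 \<Longrightarrow>
                     (\<lambda>x. exp (- \<gamma> * x) * Df j x) absolutely_integrable_on {0..}"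
    and vanish: "\<And>\<gamma> j. gamma_min f < ereal \<gamma> \<Longrightarrow> j \<le> 4 \<Longrightarrow>
                     ((\<lambda>x. exp (- \<gamma> * x) * Df j x) \<longlongrightarrow> 0) at_top"
  shows "\<forall>K. compact K \<and> K \<subseteq> {\<gamma>. gamma_min f < ereal \<gamma>} \<longrightarrow>
           (\<exists>C. \<forall>s \<ge> 1. \<forall>\<gamma> \<in> K. \<gamma> \<le> sqrt s \<longrightarrow>
              summable (\<lambda>n. f (real (n + 1) / sqrt s) * (1 - \<gamma> / sqrt s) ^ (n + 1)) \<and>
              \<bar>F_s f s (1 - \<gamma> / sqrt s)
                - ((if \<gamma> = sqrt s then 0 else sqrt s * enn2real (laplace f (gamma_s s \<gamma>))) - 1 / 2)\<bar>
                \<le> C / sqrt s)"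
proof (intro allI impI)
  fix K :: "real set"
  assume K: "compact K \<and> K \<subseteq> {\<gamma>. gamma_min f < ereal \<gamma>}"
  define W where "W B b x = exp(-b*x) * (\<bar>Df 2 x\<bar> + 2*B*\<bar>Df 1 x\<bar> + B^2*\<bar>f x\<bar>)" for B b x
  define gc where "gc c x = exp(-c*x) * f x" for c x
  define Ic where "Ic c = integral {0..} (gc c)" for c
  have d0: "(f has_real_derivative Df 1 t) (at t within {0..})" if "0 \<le> t" for t
    using Df_deriv[of 0 t] Df0 that by simp
  have d1: "(Df 1 has_real_derivative Df 2 t) (at t within {0..})" if "0 \<le> t" for t
    using Df_deriv[of 1 t] that by (simp add: numeral_2_eq_2)
  have absI: "(\<lambda>x. exp(-b*x) * \<bar>Df j x\<bar>) integrable_on {0..}"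
    if "gamma_min f < ereal b" "j \<le> 4" for b j
  proof -
    have "(\<lambda>x. norm (exp(-b*x) * Df j x)) integrable_on {0..}"
      using integrable[OF that] unfolding absolutely_integrable_on_def by blast
    moreover have "(\<lambda>x. norm (exp(-b*x) * Df j x)) = (\<lambda>x. exp(-b*x) * \<bar>Df j x\<bar>)"
      by (rule ext) (simp add: abs_mult)
    ultimately show ?thesis by simp
  qed
  have Wint: "W B b integrable_on {0..}" if "gamma_min f < ereal b" for B b
  proof -
    have "(\<lambda>x. exp(-b*x) * \<bar>Df 2 x\<bar> + 2*B * (exp(-b*x) * \<bar>Df 1 x\<bar>) + B^2 * (exp(-b*x) * \<bar>Df 0 x\<bar>))
          integrable_on {0..}"
    proof (intro integrable_add)
      show "(\<lambda>x. exp(-b*x) * \<bar>Df 2 x\<bar>) integrable_on {0..}" by (rule absI[OF that]) simp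
      show "(\<lambda>x. 2*B * (exp(-b*x) * \<bar>Df 1 x\<bar>)) integrable_on {0..}"
        using integrable_cmul[OF absI[OF that, of 1], of "2*B"] by simp
      show "(\<lambda>x. B^2 * (exp(-b*x) * \<bar>Df 0 x\<bar>)) integrable_on {0..}"
        using integrable_cmul[OF absI[OF that, of 0], of "B^2"] by simp
    qed
    moreover have "(\<lambda>x. exp(-b*x) * \<bar>Df 2 x\<bar> + 2*B * (exp(-b*x) * \<bar>Df 1 x\<bar>) + B^2 * (exp(-b*x) * \<bar>Df 0 x\<bar>))
          = W B b"
      by (rule ext) (simp add: W_def Df0 algebra_simps)
    ultimately show ?thesis by simp
  qed
  have Wnn: "0 \<le> W B b x" if "0 \<le> B" for B b x
    unfolding W_def using that by (intro mult_nonneg_nonneg add_nonneg_nonneg) auto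
  have gci: "gc c integrable_on {0..}" if "gamma_min f < ereal c" for c
    using integrable[OF that, of 0] Df0 unfolding gc_def absolutely_integrable_on_def by simp
  have gen: "summable (\<lambda>n. gc c (real (n+1) * h)) \<and>
    \<bar>(\<Sum>n. gc c (real (n+1) * h)) - (Ic c / h - 1/2)\<bar> \<le> h/8 * integral {0..} (W B b)"
    if c: "gamma_min f < ereal c" and b: "gamma_min f < ereal b" and h: "0 < h"
      and cB: "\<bar>c\<bar> \<le> B" and bc: "b \<le> c" for c h B b
    unfolding Ic_def
  proof (rule trap[OF h])
    fix t :: real assume t: "0 \<le> t"
    show "(gc c has_real_derivative exp(-c*t)*(Df 1 t - c*f t)) (at t within {0..})"
      unfolding gc_def by (rule derivative_eq_intros d0[OF t] refl | simp add: algebra_simps)+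
    show "((\<lambda>x. exp(-c*x)*(Df 1 x - c*f x)) has_real_derivative
            exp(-c*t)*(Df 2 t - 2*c*Df 1 t + c^2*f t)) (at t within {0..})"
      by (rule derivative_eq_intros d0[OF t] d1[OF t] refl | simp add: algebra_simps power2_eq_square)+
    show "\<bar>exp(-c*t)*(Df 2 t - 2*c*Df 1 t + c^2*f t)\<bar> \<le> W B b t"
      unfolding W_def by (rule wbound[OF cB bc t])
    show "0 \<le> gc c t" unfolding gc_def using nonneg[OF t] by simp
  next
    show "gc c integrable_on {0..}" by (rule gci[OF c])
    show "W B b integrable_on {0..}" by (rule Wint[OF b])
    show "gc c 0 = 1" by (simp add: gc_def f0)
    show "(gc c \<longlongrightarrow> 0) at_top" using vanish[OF c, of 0] Df0 unfolding gc_def by simp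
  qed
  have Inn: "0 \<le> Ic c" for c
    unfolding Ic_def gc_def
    by (cases "(\<lambda>x. exp(-c*x) * f x) integrable_on {0..}")
       (auto intro!: hk_int_nonneg mult_nonneg_nonneg nonneg simp: not_integrable_integral)
  show "\<exists>C. \<forall>s \<ge> 1. \<forall>\<gamma> \<in> K. \<gamma> \<le> sqrt s \<longrightarrow>
              summable (\<lambda>n. f (real (n + 1) / sqrt s) * (1 - \<gamma> / sqrt s) ^ (n + 1)) \<and>
              \<bar>F_s f s (1 - \<gamma> / sqrt s)
                - ((if \<gamma> = sqrt s then 0 else sqrt s * enn2real (laplace f (gamma_s s \<gamma>))) - 1 / 2)\<bar>
                \<le> C / sqrt s"
  proof (cases "K = {}")
    case True then show ?thesis by auto
  next
    case False
    obtain a where aK: "a \<in> K" and amin: "\<And>x. x \<in> K \<Longrightarrow> a \<le> x"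
      using compact_attains_inf[of K] K False by auto
    obtain M0 where M0: "\<And>x. x \<in> K \<Longrightarrow> \<bar>x\<bar> \<le> M0"
      using compact_imp_bounded[of K] K unfolding bounded_real by auto
    define M where "M = max 1 M0"
    have M: "\<And>x. x \<in> K \<Longrightarrow> \<bar>x\<bar> \<le> M" using M0 unfolding M_def by (auto simp: le_max_iff_disj)
    have M1: "1 \<le> M" by (simp add: M_def)
    have ga: "gamma_min f < ereal a" using K aK by auto
    define Bc where "Bc = max (2*M) \<bar>a\<bar>"
    define JW where "JW = integral {0..} (W Bc a)"
    define Ia where "Ia = Ic a"
    define C where "C = M/2 + JW/8 + 2*M*(1/2 + 2*M*Ia)"
    have JW0: "0 \<le> JW" unfolding JW_def
      by (rule hk_int_nonneg[OF Wint[OF ga]]) (rule Wnn, simp add: Bc_def)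
    have Ia0: "0 \<le> Ia" unfolding Ia_def by (rule Inn)
    show ?thesis
    proof (rule exI[of _ C], intro allI impI ballI)
      fix s \<gamma> assume s: "1 \<le> s" and gK: "\<gamma> \<in> K" and gs: "\<gamma> \<le> sqrt s"
      define r where "r = sqrt s"
      have r1: "1 \<le> r" using s by (simp add: r_def)
      have gM: "\<bar>\<gamma>\<bar> \<le> M" using M[OF gK] .
      show "summable (\<lambda>n. f (real (n + 1) / sqrt s) * (1 - \<gamma> / sqrt s) ^ (n + 1)) \<and>
              \<bar>F_s f s (1 - \<gamma> / sqrt s)
                - ((if \<gamma> = sqrt s then 0 else sqrt s * enn2real (laplace f (gamma_s s \<gamma>))) - 1 / 2)\<bar>
                \<le> C / sqrt s"
      proof (cases "\<gamma> = r")
        case True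
        have z: "1 - \<gamma> / sqrt s = 0" using True r1 by (simp add: r_def)
        have "r/2 \<le> C"
        proof -
          have "0 \<le> 2*M*(1/2 + 2*M*Ia)" using Ia0 M1 by simp
          then show ?thesis using True gM JW0 unfolding C_def by linarith
        qed
        then have "1/2 \<le> C / r" using r1 by (simp add: field_simps)
        then show ?thesis unfolding z F_s_def using True by (simp add: r_def)
      next
        case False
        then have gr: "\<gamma> < r" using gs by (simp add: r_def)
        define \<rho> where "\<rho> = 1 - \<gamma> / r"
        have \<rho>0: "0 < \<rho>" using gr r1 by (simp add: \<rho>_def field_simps)
        define c where "c = gamma_s s \<gamma>"
        have c_eq: "c = - r * ln \<rho>" by (simp add: c_def gamma_s_def r_def \<rho>_def)
        define h where "h = 1 / r"
        have h0: "0 < h" using r1 by (simp add: h_def)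
        have cg: "\<gamma> \<le> c"
        proof -
          have "ln \<rho> \<le> \<rho> - 1" by (rule ln_le_minus_one[OF \<rho>0])
          then have "r * ln \<rho> \<le> r * (\<rho> - 1)" using r1 by (intro mult_left_mono) auto
          also have "r * (\<rho> - 1) = - \<gamma>" using r1 by (simp add: \<rho>_def field_simps)
          finally show ?thesis unfolding c_eq by simp
        qed
        have ac: "a \<le> c" using amin[OF gK] cg by simp
        have gc_min: "gamma_min f < ereal c"
        proof -
          have "gamma_min f < ereal \<gamma>" using K gK by auto
          moreover have "ereal \<gamma> \<le> ereal c" using cg by simp
          ultimately show ?thesis by (rule less_le_trans)
        qed
        have trm: "f (real (n + 1) / sqrt s) * (1 - \<gamma> / sqrt s) ^ (n + 1) = gc c (real (n+1) * h)" for n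
        proof -
          have "\<rho> ^ (n+1) = exp (real (n+1) * ln \<rho>)"
            using \<rho>0 exp_of_nat_mult[of "n+1" "ln \<rho>"] by simp
          also have "real (n+1) * ln \<rho> = - c * (real (n+1) * h)"
            using r1 by (simp add: c_eq h_def field_simps)
          finally have e1: "(1 - \<gamma> / sqrt s) ^ (n+1) = exp (- c * (real (n+1) * h))"
            unfolding \<rho>_def r_def .
          have e2: "real (n + 1) / sqrt s = real (n+1) * h" by (simp add: h_def r_def)
          show ?thesis unfolding gc_def e1 e2 by (rule mult.commute)
        qed
        have Fs: "F_s f s (1 - \<gamma> / sqrt s) = (\<Sum>n. gc c (real (n+1) * h))"
          unfolding F_s_def trm ..
        have lap: "enn2real (laplace f (gamma_s s \<gamma>)) = Ic c"
        proof -
          have HI: "(gc c has_integral Ic c) {0..}" unfolding Ic_def using gci[OF gc_min] by blast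
          have "integral\<^sup>N lborel (\<lambda>x. ennreal (gc c x) * indicator {0..} x) = ennreal (Ic c)"
            by (rule nn_integral_has_integral_lebesgue'[OF _ HI]) (simp add: gc_def nonneg)
          then have "laplace f c = ennreal (Ic c)" unfolding laplace_def gc_def by simp
          then show ?thesis using Inn[of c] by (simp add: c_def)
        qed
        have rhs: "(if \<gamma> = sqrt s then 0 else sqrt s * enn2real (laplace f (gamma_s s \<gamma>))) - 1 / 2
                   = Ic c / h - 1/2"
          using False by (simp add: lap r_def h_def)
        show ?thesis
        proof (cases "c \<le> 2*M")
          case True
          have cB: "\<bar>c\<bar> \<le> Bc" using True ac unfolding Bc_def by auto
          have G: "summable (\<lambda>n. gc c (real (n+1) * h)) \<and>
            \<bar>(\<Sum>n. gc c (real (n+1) * h)) - (Ic c / h - 1/2)\<bar> \<le> h/8 * JW"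
            unfolding JW_def by (rule gen[OF gc_min ga h0 cB ac])
          have "h/8 * JW \<le> C / sqrt s"
          proof -
            have "0 \<le> 2*M*(1/2 + 2*M*Ia)" using Ia0 M1 by simp
            then have "JW/8 \<le> C" unfolding C_def using M1 by linarith
            moreover have "h/8 * JW = (JW/8) / sqrt s" by (simp add: h_def r_def)
            ultimately show ?thesis by (metis divide_right_mono real_sqrt_ge_zero s order_trans zero_le_one)
          qed
          then have B1: "\<bar>(\<Sum>n. gc c (real (n+1) * h)) - (Ic c / h - 1/2)\<bar> \<le> C / sqrt s"
            using G by linarith
          show ?thesis unfolding Fs rhs trm using G B1 by blast
        next
        case False
          have c0: "0 \<le> c" using False M1 by linarith
          have r2M: "r < 2*M"
          proof (rule ccontr)
            assume "\<not> r < 2*M"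
            then have r2: "2*M \<le> r" by simp
            have t: "\<gamma> / r \<le> 1/2" using gM r2 r1 M1 by (simp add: field_simps)
            have \<rho>h: "1/2 \<le> \<rho>" using t by (simp add: \<rho>_def)
            have "ln (inverse \<rho>) \<le> inverse \<rho> - 1" by (rule ln_le_minus_one) (use \<rho>0 in simp)
            then have "- ln \<rho> \<le> inverse \<rho> - 1" by (simp add: ln_inverse)
            then have "r * (- ln \<rho>) \<le> r * (inverse \<rho> - 1)" using r1
              by (intro mult_left_mono) auto
            then have "c \<le> r * (inverse \<rho> - 1)" unfolding c_eq by simp
            also have "r * (inverse \<rho> - 1) = \<gamma> / \<rho>"
              using \<rho>0 r1 by (simp add: \<rho>_def field_simps)
            also have "\<gamma> / \<rho> \<le> 2*M"
            proof (cases "0 \<le> \<gamma>")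
              case True
              have "\<gamma> / \<rho> \<le> \<gamma> / (1/2)" using True \<rho>h by (intro divide_left_mono) auto
              then show ?thesis using gM by simp
            next
              case False
              then have "\<gamma> / \<rho> \<le> 0" using \<rho>0 by (simp add: divide_nonpos_pos)
              then show ?thesis using M1 by simp
            qed
            finally show False using \<open>\<not> c \<le> 2*M\<close> by simp
          qed
          have G: "summable (\<lambda>n. gc c (real (n+1) * h))"
            using gen[OF gc_min gc_min h0 order_refl order_refl] by blast
          have Fle: "(\<Sum>n. gc c (real (n+1) * h)) \<le> Ic c / h"
            unfolding Ic_def
          proof (rule trap_dec[OF h0 gci[OF gc_min] _ _ G])
            fix t :: real assume "0 \<le> t" then show "0 \<le> gc c t" unfolding gc_def by (simp add: nonneg)
          next
            fix x y :: real assume xy: "0 \<le> x" "x \<le> y"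
            have "exp(-c*y) \<le> exp(-c*x)" using xy c0 by (simp add: mult_left_mono)
            moreover have "f y \<le> f x" by (rule nonincr[OF xy])
            ultimately show "gc c y \<le> gc c x" unfolding gc_def
              by (intro mult_mono) (use xy nonneg in auto)
          qed
          have F0: "0 \<le> (\<Sum>n. gc c (real (n+1) * h))"
            by (rule suminf_nonneg[OF G]) (simp add: gc_def nonneg h0 less_imp_le)
          have IcIa: "Ic c \<le> Ia"
            unfolding Ic_def Ia_def
          proof (rule Henstock_Kurzweil_Integration.integral_le[OF gci[OF gc_min] gci[OF ga]])
            fix x :: real assume "x \<in> {0..}"
            then have x: "0 \<le> x" by simp
            have "exp(-c*x) \<le> exp(-a*x)" using ac x by (simp add: mult_right_mono)
            then show "gc c x \<le> gc a x" unfolding gc_def by (intro mult_right_mono) (simp_all add: nonneg x)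
          qed
          have hr: "Ic c / h = r * Ic c" by (simp add: h_def)
          have "r * Ic c \<le> 2*M * Ia"
            using r2M IcIa Inn[of c] Ia0 r1 M1 by (intro mult_mono) auto
          then have bnd: "\<bar>(\<Sum>n. gc c (real (n+1) * h)) - (Ic c / h - 1/2)\<bar> \<le> 1/2 + 2*M*Ia"
          proof -
            have "0 \<le> r * Ic c" using Inn[of c] r1 by simp
            then show ?thesis using Fle F0 \<open>r * Ic c \<le> 2*M * Ia\<close> unfolding hr abs_le_iff by linarith
          qed
          have "2*M*(1/2 + 2*M*Ia) \<le> C" unfolding C_def using JW0 M1 by simp
          then have "(1/2 + 2*M*Ia) * r \<le> C"
          proof -
            have "(1/2 + 2*M*Ia) * r \<le> (1/2 + 2*M*Ia) * (2*M)"
              using r2M Ia0 M1 by (intro mult_left_mono) auto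
            then show ?thesis using \<open>2*M*(1/2 + 2*M*Ia) \<le> C\<close> by (simp add: mult.commute)
          qed
          then have "1/2 + 2*M*Ia \<le> C / r" using r1 by (simp add: field_simps)
          then have B1: "\<bar>(\<Sum>n. gc c (real (n+1) * h)) - (Ic c / h - 1/2)\<bar> \<le> C / sqrt s"
            using bnd unfolding r_def by linarith
          show ?thesis unfolding Fs rhs trm using G B1 by blast
        qed
      qed
    qed
  qed
qed

end
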